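(* Let $\mathcal{G}$ be a multi-player Markov game and suppose there exists a stationary product policy $\pi^\star=(\pi^\star_1,\dots,\pi^\star_n)$ such that $\sum_{i=1}^nV_i^{\pi^\star_i,\pi_{-i}}(\rho)-\sum_{i=1}^nV_i^{\pi}(\rho)\ge0$ for every stationary product policy $\pi$. Then, with $x^\star$ the parameterization of $\pi^\star$, $$\langle x-x^\star,F_{\mathcal{G}}(x)\circ\Lambda(x,x^\star)\rangle\ge0\quad\text{for all }x\in\mathcal{X}.$$ In particular, if $\mathcal{G}$ admits a single controller $c$, then $\langle x-x^\star,F_{\mathcal{G}}(x)\circ A(x)\circ W(x^\star)\rangle\ge0$ for all $x\in\mathcal{X}$, where $A_i(x)[s,a_i]=1$ and $W_i(x^\star)[s,a_i]=1$ for $i\ne c$, while $A_c(x)[s,a_c]=(\tilde d^{\pi_c}_\rho[s])^{-1}$ and $W_c(x^\star)[s,a_c]=\tilde d^{\pi^\star_c}_\rho[s]$.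
   Context: A multi-player Markov game: players $[n]$; finite states $\mathcal{S}$; finite nonempty action sets $\mathcal{A}_i$, $\mathcal{A}=\prod_i\mathcal{A}_i$; transitions $\mathbb{P}(s'\mid s,a)$ with $\zeta:=\min_{(s,a)}(1-\sum_{s'}\mathbb{P}(s'\mid s,a))>0$ (the remaining mass is the termination probability); rewards $R_i:\mathcal{S}\times\mathcal{A}\to[-1,1]$; initial distribution $\rho$ with full support. Stationary policies $\pi_i:\mathcal{S}\to\Delta(\mathcal{A}_i)$ are directly parameterized by $x_i\in\Delta(\mathcal{A}_i)^{\mathcal{S}}$, $x_{i,s}[a_i]=\pi_i(a_i\mid s)$; $\mathcal{X}=\prod_i\Delta(\mathcal{A}_i)^{\mathcal{S}}$. $V_i^\pi(s)=\mathbb{E}_\pi[\sum_{h=0}^HR_i(s_h,a_h)\mid s_0=s]$ ($H$ the last step before termination), $V_i^\pi(\rho)=\mathbb{E}_{s\sim\rho}V_i^\pi(s)$. $F_{\mathcal{G}}(x)=-(\nabla_{x_1}V_1^\pi(\rho),\dots,\nabla_{x_n}V_n^\pi(\rho))$. Unnormalized visitation $\tilde d^\pi_\rho[s]=\mathbb{E}_{s_0\sim\rho}\sum_{h\ge0}\mathbb{P}^\pi(s_h=s\mid s_0)$. $\Lambda(x,x^\star)=(\Lambda_1,\dots,\Lambda_n)$ with $\Lambda_i(x,x^\star)[s,a_i]=\tilde d^{\pi^\star_i,\pi_{-i}}_\rho[s]/\tilde d^{\pi}_\rho[s]$. Single controller $c$: $\mathbb{P}(\cdot\mid s,a)$ depends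 on $a$ only via $a_c$; then $\tilde d^\pi_\rho$ depends only on $\pi_c$ and is written $\tilde d^{\pi_c}_\rho$. $\circ$ is the coordinatewise product. *)

theory Defs
  imports "HOL-Analysis.Analysis"
begin

text \<open>P s a s' is the transition probability, the missing mass is the termination probability.\<close>

definition joint :: "('p \<Rightarrow> 'a set) \<Rightarrow> ('p \<Rightarrow> 'a) set" where
  "joint Act = Pi\<^sub>E UNIV Act"

definition markov_game ::
  "('p::finite \<Rightarrow> 'a set) \<Rightarrow> ('s::finite \<Rightarrow> ('p \<Rightarrow> 'a) \<Rightarrow> 's \<Rightarrow> real)
   \<Rightarrow> ('p \<Rightarrow> 's \<Rightarrow> ('p \<Rightarrow> 'a) \<Rightarrow> real) \<Rightarrow> ('s \<Rightarrow> real) \<Rightarrow> bool" where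
  "markov_game Act P R \<rho> \<longleftrightarrow>
     (\<forall>i. finite (Act i) \<and> Act i \<noteq> {}) \<and>
     (\<forall>s a s'. a \<in> joint Act \<longrightarrow> P s a s' \<ge> 0) \<and>
     (\<exists>\<zeta>>0. \<forall>s a. a \<in> joint Act \<longrightarrow> 1 - (\<Sum>s'\<in>UNIV. P s a s') \<ge> \<zeta>) \<and>
     (\<forall>i s a. a \<in> joint Act \<longrightarrow> -1 \<le> R i s a \<and> R i s a \<le> 1) \<and>
     (\<forall>s. \<rho> s > 0) \<and> (\<Sum>s\<in>UNIV. \<rho> s) = 1"

text \<open>Direct parameterization: x i s a = \<pi>_i(a | s); set to 0 for a outside Act i.\<close>
definition policies :: "('p \<Rightarrow> 'a set) \<Rightarrow> ('p \<Rightarrow> 's \<Rightarrow> 'a \<Rightarrow> real) set" where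
  "policies Act = {x. \<forall>i s. (\<forall>a. 0 \<le> x i s a) \<and> (\<forall>a. a \<notin> Act i \<longrightarrow> x i s a = 0)
                          \<and> (\<Sum>a\<in>Act i. x i s a) = 1}"

definition pol :: "('p::finite \<Rightarrow> 's \<Rightarrow> 'a \<Rightarrow> real) \<Rightarrow> 's \<Rightarrow> ('p \<Rightarrow> 'a) \<Rightarrow> real" where
  "pol x s a = (\<Prod>i\<in>UNIV. x i s (a i))"

definition Ppi :: "('p::finite \<Rightarrow> 'a set) \<Rightarrow> ('s \<Rightarrow> ('p \<Rightarrow> 'a) \<Rightarrow> 's \<Rightarrow> real)
    \<Rightarrow> ('p \<Rightarrow> 's \<Rightarrow> 'a \<Rightarrow> real) \<Rightarrow> 's \<Rightarrow> 's \<Rightarrow> real" where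
  "Ppi Act P x s s' = (\<Sum>a\<in>joint Act. pol x s a * P s a s')"

text \<open>stepdist h s = P^\<pi>(s_h = s), with s_0 \<sim> \<rho> (sub-probability, accounting for termination).\<close>
primrec stepdist :: "('p::finite \<Rightarrow> 'a set) \<Rightarrow> ('s::finite \<Rightarrow> ('p \<Rightarrow> 'a) \<Rightarrow> 's \<Rightarrow> real)
    \<Rightarrow> ('s \<Rightarrow> real) \<Rightarrow> ('p \<Rightarrow> 's \<Rightarrow> 'a \<Rightarrow> real) \<Rightarrow> nat \<Rightarrow> 's \<Rightarrow> real" where
  "stepdist Act P \<rho> x 0 s' = \<rho> s'"
| "stepdist Act P \<rho> x (Suc h) s' = (\<Sum>s\<in>UNIV. stepdist Act P \<rho> x h s * Ppi Act P x s s')"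

definition dvis where
  "dvis Act P \<rho> x s = (\<Sum>h. stepdist Act P \<rho> x h s)"

definition Vval where
  "Vval Act P R \<rho> x i =
     (\<Sum>h. \<Sum>s\<in>UNIV. stepdist Act P \<rho> x h s * (\<Sum>a\<in>joint Act. pol x s a * R i s a))"

definition Fgrad where
  "Fgrad Act P R \<rho> x i s ai =
     - deriv (\<lambda>t. Vval Act P R \<rho> (x(i := (x i)(s := (x i s)(ai := x i s ai + t)))) i) 0"

definition Lam where
  "Lam Act P \<rho> x xs i s ai = dvis Act P \<rho> (x(i := xs i)) s / dvis Act P \<rho> x s"

definition single_controller :: "('p \<Rightarrow> 'a set) \<Rightarrow> ('s \<Rightarrow> ('p \<Rightarrow> 'a) \<Rightarrow> 's \<Rightarrow> real) \<Rightarrow> 'p \<Rightarrow> bool" where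
  "single_controller Act P c \<longleftrightarrow>
     (\<forall>s a a'. a \<in> joint Act \<longrightarrow> a' \<in> joint Act \<longrightarrow> a c = a' c \<longrightarrow> P s a = P s a')"

definition Aw where
  "Aw Act P \<rho> c x i s ai = (if i = c then 1 / dvis Act P \<rho> x s else 1)"

definition Ww where
  "Ww Act P \<rho> c xs i s ai = (if i = c then dvis Act P \<rho> xs s else 1)"

end

theory Submission imports Defs "HOL-Library.FuncSet" begin

context
  fixes Act :: "'p::finite \<Rightarrow> 'a set"
    and P :: "'s::finite \<Rightarrow> ('p \<Rightarrow> 'a) \<Rightarrow> 's \<Rightarrow> real"
begin

lemma sd_abs:
  assumes "\<And>s. (\<Sum>s'\<in>UNIV. \<bar>Ppi Act P y s s'\<bar>) \<le> \<gamma>" "0 \<le> \<gamma>"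
  shows "(\<Sum>s\<in>UNIV. \<bar>stepdist Act P \<mu> y h s\<bar>) \<le> \<gamma>^h * (\<Sum>s\<in>UNIV. \<bar>\<mu> s\<bar>)"
proof (induction h)
  case 0 then show ?case by simp
next
  case (Suc h)
  have "(\<Sum>s'\<in>UNIV. \<bar>stepdist Act P \<mu> y (Suc h) s'\<bar>)
      \<le> (\<Sum>s'\<in>UNIV. \<Sum>s\<in>UNIV. \<bar>stepdist Act P \<mu> y h s\<bar> * \<bar>Ppi Act P y s s'\<bar>)"
    by (auto intro!: sum_mono order.trans[OF sum_abs] simp: abs_mult)
  also have "\<dots> = (\<Sum>s\<in>UNIV. \<bar>stepdist Act P \<mu> y h s\<bar> * (\<Sum>s'\<in>UNIV. \<bar>Ppi Act P y s s'\<bar>))"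
    by (subst sum.swap) (simp add: sum_distrib_left)
  also have "\<dots> \<le> (\<Sum>s\<in>UNIV. \<bar>stepdist Act P \<mu> y h s\<bar> * \<gamma>)"
    by (intro sum_mono mult_left_mono assms) auto
  also have "\<dots> \<le> \<gamma>^Suc h * (\<Sum>s\<in>UNIV. \<bar>\<mu> s\<bar>)"
    using Suc assms(2) by (simp add: sum_distrib_right[symmetric] mult_right_mono mult.assoc mult.commute[of _ \<gamma>] sum_distrib_left[symmetric] mult_left_mono)
  finally show ?case .
qed

lemma sd_summable:
  assumes "\<And>s. (\<Sum>s'\<in>UNIV. \<bar>Ppi Act P y s s'\<bar>) \<le> \<gamma>" "0 \<le> \<gamma>" "\<gamma> < 1"
  shows "summable (\<lambda>h. stepdist Act P \<mu> y h s)"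
proof (rule summable_comparison_test)
  show "\<exists>N. \<forall>n\<ge>N. norm (stepdist Act P \<mu> y n s) \<le> \<gamma>^n * (\<Sum>s\<in>UNIV. \<bar>\<mu> s\<bar>)"
  proof (intro exI allI impI)
    fix n
    have "\<bar>stepdist Act P \<mu> y n s\<bar> \<le> (\<Sum>s\<in>UNIV. \<bar>stepdist Act P \<mu> y n s\<bar>)"
      by (rule member_le_sum) auto
    then show "norm (stepdist Act P \<mu> y n s) \<le> \<gamma>^n * (\<Sum>s\<in>UNIV. \<bar>\<mu> s\<bar>)"
      using sd_abs[OF assms(1,2)] by (simp add: order.trans)
  qed
  show "summable (\<lambda>n. \<gamma>^n * (\<Sum>s\<in>UNIV. \<bar>\<mu> s\<bar>))"
    using assms by (intro summable_mult2 summable_geometric) auto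
qed

lemma dvis_fix:
  assumes "\<And>s. (\<Sum>s'\<in>UNIV. \<bar>Ppi Act P y s s'\<bar>) \<le> \<gamma>" "0 \<le> \<gamma>" "\<gamma> < 1"
  shows "dvis Act P \<mu> y s' = \<mu> s' + (\<Sum>s\<in>UNIV. dvis Act P \<mu> y s * Ppi Act P y s s')"
proof -
  note sm = sd_summable[OF assms]
  have "(\<Sum>h. stepdist Act P \<mu> y (Suc h) s') = dvis Act P \<mu> y s' - \<mu> s'"
    unfolding dvis_def using suminf_split_head[OF sm] by simp
  moreover have "(\<Sum>h. stepdist Act P \<mu> y (Suc h) s') = (\<Sum>s\<in>UNIV. dvis Act P \<mu> y s * Ppi Act P y s s')"
    unfolding stepdist.simps dvis_def
    by (subst suminf_sum) (auto intro!: summable_mult2 sm simp: suminf_mult2[OF sm])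
  ultimately show ?thesis by simp
qed

lemma Vval_eq:
  assumes "\<And>s. (\<Sum>s'\<in>UNIV. \<bar>Ppi Act P y s s'\<bar>) \<le> \<gamma>" "0 \<le> \<gamma>" "\<gamma> < 1"
  shows "Vval Act P R \<rho> y i = (\<Sum>s\<in>UNIV. dvis Act P \<rho> y s * (\<Sum>a\<in>joint Act. pol y s a * R i s a))"
  unfolding Vval_def dvis_def
  by (subst suminf_sum) (auto intro!: summable_mult2 sd_summable[OF assms] simp: suminf_mult2[OF sd_summable[OF assms]])

definition dl :: "'s \<Rightarrow> 's \<Rightarrow> real" where "dl s0 u = (if u = s0 then 1 else 0)"

lemma first_step:
  "stepdist Act P (dl s0) y (Suc h) s = (\<Sum>s'\<in>UNIV. Ppi Act P y s0 s' * stepdist Act P (dl s') y h s)"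
proof (induction h arbitrary: s)
  case 0 have "(\<Sum>s'\<in>UNIV. Ppi Act P y s0 s' * dl s' s) = Ppi Act P y s0 s"
    unfolding dl_def by (simp add: if_distrib[where f="\<lambda>c. _ * c"] cong: if_cong)
  moreover have "(\<Sum>u\<in>UNIV. dl s0 u * Ppi Act P y u s) = Ppi Act P y s0 s"
    unfolding dl_def by (simp add: if_distrib[where f="\<lambda>c. c * _"] cong: if_cong)
  ultimately show ?case by simp
next
  case (Suc h)
  have "stepdist Act P (dl s0) y (Suc (Suc h)) s
     = (\<Sum>u\<in>UNIV. (\<Sum>s'\<in>UNIV. Ppi Act P y s0 s' * stepdist Act P (dl s') y h u) * Ppi Act P y u s)"
    by (simp only: stepdist.simps(2)[of _ _ _ _ "Suc h"] Suc)
  also have "\<dots> = (\<Sum>s'\<in>UNIV. Ppi Act P y s0 s' * stepdist Act P (dl s') y (Suc h) s)"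
    by (simp add: sum_distrib_right sum_distrib_left mult.assoc) (rule sum.swap)
  finally show ?case .
qed

definition wcol where "wcol y f s0 = (\<Sum>s\<in>UNIV. dvis Act P (dl s0) y s * f s)"

lemma wcol_bellman:
  assumes "\<And>s. (\<Sum>s'\<in>UNIV. \<bar>Ppi Act P y s s'\<bar>) \<le> \<gamma>" "0 \<le> \<gamma>" "\<gamma> < 1"
  shows "wcol y f s0 = f s0 + (\<Sum>s'\<in>UNIV. Ppi Act P y s0 s' * wcol y f s')"
proof -
  note sm = sd_summable[OF assms]
  have d: "dvis Act P (dl s0) y s = dl s0 s + (\<Sum>s'\<in>UNIV. Ppi Act P y s0 s' * dvis Act P (dl s') y s)" for s
  proof -
    have "(\<Sum>h. stepdist Act P (dl s0) y (Suc h) s) = dvis Act P (dl s0) y s - dl s0 s"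
      unfolding dvis_def using suminf_split_head[OF sm] by simp
    moreover have "(\<Sum>h. stepdist Act P (dl s0) y (Suc h) s) = (\<Sum>s'\<in>UNIV. Ppi Act P y s0 s' * dvis Act P (dl s') y s)"
      unfolding first_step dvis_def
      by (subst suminf_sum) (auto intro!: summable_mult sm simp: suminf_mult[OF sm])
    ultimately show ?thesis by simp
  qed
  have "wcol y f s0 = (\<Sum>s\<in>UNIV. dl s0 s * f s) + (\<Sum>s\<in>UNIV. \<Sum>s'\<in>UNIV. Ppi Act P y s0 s' * dvis Act P (dl s') y s * f s)"
    unfolding wcol_def d by (simp add: distrib_right sum.distrib sum_distrib_right)
  also have "(\<Sum>s\<in>UNIV. dl s0 s * f s) = f s0"
    unfolding dl_def by (simp add: if_distrib[where f="\<lambda>c. c * _"] cong: if_cong)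
  also have "(\<Sum>s\<in>UNIV. \<Sum>s'\<in>UNIV. Ppi Act P y s0 s' * dvis Act P (dl s') y s * f s)
      = (\<Sum>s'\<in>UNIV. Ppi Act P y s0 s' * wcol y f s')"
    unfolding wcol_def by (subst sum.swap) (simp add: sum_distrib_left mult.assoc)
  finally show ?thesis .
qed

end

lemma algL:
  fixes D \<mu> w f :: "'s::finite \<Rightarrow> real"
  assumes "\<And>s'. D s' = \<mu> s' + (\<Sum>s\<in>UNIV. D s * M' s s')"
    "\<And>s. w s = f s + (\<Sum>s'\<in>UNIV. M s s' * w s')"
  shows "(\<Sum>s\<in>UNIV. D s * f s) = (\<Sum>s\<in>UNIV. \<mu> s * w s) + (\<Sum>s\<in>UNIV. D s * (\<Sum>s'\<in>UNIV. (M' s s' - M s s') * w s'))"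
proof -
  have "(\<Sum>s\<in>UNIV. D s * f s) = (\<Sum>s\<in>UNIV. D s * w s) - (\<Sum>s\<in>UNIV. D s * (\<Sum>s'\<in>UNIV. M s s' * w s'))"
  proof -
    have fe: "f s = w s - (\<Sum>s'\<in>UNIV. M s s' * w s')" for s using assms(2)[of s] by linarith
    show ?thesis by (simp only: fe right_diff_distrib sum_subtractf)
  qed
  also have "(\<Sum>s\<in>UNIV. D s * w s) = (\<Sum>s\<in>UNIV. \<mu> s * w s) + (\<Sum>s'\<in>UNIV. (\<Sum>s\<in>UNIV. D s * M' s s') * w s')"
    by (subst (1) assms(1)) (simp add: algebra_simps sum.distrib)
  also have "(\<Sum>s'\<in>UNIV. (\<Sum>s\<in>UNIV. D s * M' s s') * w s') = (\<Sum>s\<in>UNIV. D s * (\<Sum>s'\<in>UNIV. M' s s' * w s'))"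
    by (simp add: sum_distrib_right sum_distrib_left mult.assoc) (rule sum.swap)
  finally show ?thesis
    by (simp add: algebra_simps sum_subtractf sum.distrib right_diff_distrib)
qed


definition Qc where
  "Qc Act x i s b G = (\<Sum>a\<in>{a\<in>joint Act. a i = b}. (\<Prod>j\<in>UNIV-{i}. x j s (a j)) * G a)"

lemma pol_update: "pol (x(i:=z)) s a = z s (a i) * (\<Prod>j\<in>UNIV-{i}. x j s (a j))"
  unfolding pol_def by (subst prod.remove[of UNIV i]) (auto intro!: prod.cong)

lemma pol_update_self: "pol x s a = x i s (a i) * (\<Prod>j\<in>UNIV-{i}. x j s (a j))"
  using pol_update[of x i "x i"] by simp

definition cQ where "cQ Act P R x i s b = Qc Act x i s b (\<lambda>a. R i s a + (\<Sum>s'\<in>UNIV. P s a s' * wcol Act P x (\<lambda>s. \<Sum>a\<in>joint Act. pol x s a * R i s a) s'))"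

lemma zt_eq: "((x i)(s0 := (x i s0)(ai := x i s0 ai + (t::real)))) s b = x i s b + (if s = s0 \<and> b = ai then t else 0)"
  by auto

context
  fixes Act :: "'p::finite \<Rightarrow> 'a set"
    and P :: "'s::finite \<Rightarrow> ('p \<Rightarrow> 'a) \<Rightarrow> 's \<Rightarrow> real"
    and \<zeta> :: real
  assumes fin: "\<forall>i. finite (Act i) \<and> Act i \<noteq> {}"
    and Pnn: "\<forall>s a s'. a \<in> joint Act \<longrightarrow> P s a s' \<ge> 0"
    and zpos: "\<zeta> > 0"
    and Pz: "\<forall>s a. a \<in> joint Act \<longrightarrow> 1 - (\<Sum>s'\<in>UNIV. P s a s') \<ge> \<zeta>"
begin

lemma fin_joint: "finite (joint Act)"
  unfolding joint_def using fin by (auto intro!: finite_PiE)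

lemma joint_ne: "joint Act \<noteq> {}"
  unfolding joint_def using fin by (auto simp: PiE_eq_empty_iff)

lemma zle1: "\<zeta> \<le> 1"
proof -
  obtain a where a: "a \<in> joint Act" using joint_ne by auto
  have h1: "(\<Sum>s'\<in>UNIV. P undefined a s') \<ge> 0" using Pnn a by (auto intro: sum_nonneg)
  have h2: "\<zeta> \<le> 1 - (\<Sum>s'\<in>UNIV. P undefined a s')" using Pz a by blast
  from h1 h2 show ?thesis by linarith
qed

lemma Pz': "a \<in> joint Act \<Longrightarrow> (\<Sum>s'\<in>UNIV. P s a s') \<le> 1 - \<zeta>"
proof -
  assume a: "a \<in> joint Act"
  have "\<zeta> \<le> 1 - (\<Sum>s'\<in>UNIV. P s a s')" using Pz a by blast
  then show ?thesis by linarith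
qed

lemma diff_decomp:
  "(\<Sum>a\<in>joint Act. (pol (x(i:=z)) s a - pol x s a) * G a)
   = (\<Sum>b\<in>Act i. (z s b - x i s b) * Qc Act x i s b G)"
proof -
  have "(\<Sum>a\<in>joint Act. (pol (x(i:=z)) s a - pol x s a) * G a)
     = (\<Sum>a\<in>joint Act. (z s (a i) - x i s (a i)) * ((\<Prod>j\<in>UNIV-{i}. x j s (a j)) * G a))"
    by (intro sum.cong refl) (simp add: pol_update pol_update_self[of x s _ i] algebra_simps)
  also have "\<dots> = (\<Sum>b\<in>Act i. \<Sum>a\<in>{a\<in>joint Act. a i = b}. (z s (a i) - x i s (a i)) * ((\<Prod>j\<in>UNIV-{i}. x j s (a j)) * G a))"
    by (rule sum.group[symmetric]) (use fin fin_joint in \<open>auto simp: joint_def\<close>)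
  also have "\<dots> = (\<Sum>b\<in>Act i. (z s b - x i s b) * Qc Act x i s b G)"
    unfolding Qc_def sum_distrib_left by (intro sum.cong refl) auto
  finally show ?thesis .
qed

lemma abs_pol_sum:
  assumes "x \<in> policies Act"
  shows "(\<Sum>a\<in>joint Act. \<bar>pol (x(i:=z)) s a\<bar>) = (\<Sum>b\<in>Act i. \<bar>z s b\<bar>)"
proof -
  let ?g = "\<lambda>j b. \<bar>(x(i:=z)) j s b\<bar>"
  have "(\<Sum>a\<in>joint Act. \<bar>pol (x(i:=z)) s a\<bar>) = (\<Sum>a\<in>PiE UNIV Act. \<Prod>j\<in>UNIV. ?g j (a j))"
    unfolding joint_def pol_def by (simp add: abs_prod)
  also have "\<dots> = (\<Prod>j\<in>UNIV. \<Sum>b\<in>Act j. ?g j b)"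
    by (rule prod_sum_PiE[symmetric]) (use fin in auto)
  also have "\<dots> = (\<Sum>b\<in>Act i. ?g i b) * (\<Prod>j\<in>UNIV-{i}. \<Sum>b\<in>Act j. ?g j b)"
    by (subst prod.remove[of UNIV i]) auto
  also have "(\<Prod>j\<in>UNIV-{i}. \<Sum>b\<in>Act j. ?g j b) = 1"
    using assms by (intro prod.neutral) (auto simp: policies_def)
  also have "(\<Sum>b\<in>Act i. ?g i b) * 1 = (\<Sum>b\<in>Act i. \<bar>z s b\<bar>)" by simp
  finally show ?thesis .
qed

lemma Ppi_bound:
  assumes "x \<in> policies Act" "\<And>s. (\<Sum>b\<in>Act i. \<bar>z s b\<bar>) \<le> 1 + \<zeta>/2"
  shows "(\<Sum>s'\<in>UNIV. \<bar>Ppi Act P (x(i:=z)) s s'\<bar>) \<le> 1 - \<zeta>/2"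
proof -
  let ?y = "x(i:=z)"
  have "(\<Sum>s'\<in>UNIV. \<bar>Ppi Act P ?y s s'\<bar>) \<le> (\<Sum>s'\<in>UNIV. \<Sum>a\<in>joint Act. \<bar>pol ?y s a\<bar> * P s a s')"
    unfolding Ppi_def using Pnn
    by (intro sum_mono order.trans[OF sum_abs]) (auto simp: abs_mult intro!: sum_mono)
  also have "\<dots> = (\<Sum>a\<in>joint Act. \<bar>pol ?y s a\<bar> * (\<Sum>s'\<in>UNIV. P s a s'))"
    by (subst sum.swap) (simp add: sum_distrib_left)
  also have "\<dots> \<le> (\<Sum>a\<in>joint Act. \<bar>pol ?y s a\<bar> * (1 - \<zeta>))"
    using Pz' by (intro sum_mono mult_left_mono) auto
  also have "\<dots> = (\<Sum>b\<in>Act i. \<bar>z s b\<bar>) * (1 - \<zeta>)"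
    by (simp add: sum_distrib_right[symmetric] abs_pol_sum[OF assms(1)])
  also have "\<dots> \<le> (1 + \<zeta>/2) * (1 - \<zeta>)"
    using zle1 assms(2) by (intro mult_right_mono) auto
  also have "\<dots> \<le> 1 - \<zeta>/2" using zpos by (simp add: algebra_simps)
  finally show ?thesis .
qed

lemma Mx: "x \<in> policies Act \<Longrightarrow> (\<Sum>s'\<in>UNIV. \<bar>Ppi Act P x s s'\<bar>) \<le> 1 - \<zeta>/2"
  using Ppi_bound[where x=x and i=i and z="x i" and s=s] zpos by (auto simp: policies_def)

lemma gam: "0 \<le> 1 - \<zeta>/2" "1 - \<zeta>/2 < 1" using zle1 zpos by auto

lemma Ppi_diff:
  "(\<Sum>s'\<in>UNIV. (Ppi Act P (x(i:=z)) s s' - Ppi Act P x s s') * w s')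
   = (\<Sum>b\<in>Act i. (z s b - x i s b) * Qc Act x i s b (\<lambda>a. \<Sum>s'\<in>UNIV. P s a s' * w s'))"
proof -
  have "(\<Sum>s'\<in>UNIV. (Ppi Act P (x(i:=z)) s s' - Ppi Act P x s s') * w s')
     = (\<Sum>a\<in>joint Act. (pol (x(i:=z)) s a - pol x s a) * (\<Sum>s'\<in>UNIV. P s a s' * w s'))"
  proof -
    have "(Ppi Act P (x(i:=z)) s s' - Ppi Act P x s s') * w s'
        = (\<Sum>a\<in>joint Act. (pol (x(i:=z)) s a - pol x s a) * (P s a s' * w s'))" for s'
      unfolding Ppi_def sum_subtractf[symmetric] sum_distrib_right by (intro sum.cong) (simp_all add: algebra_simps)
    then show ?thesis
      by (simp add: sum_distrib_left) (rule sum.swap)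
  qed
  then show ?thesis by (simp add: diff_decomp)
qed

lemma key6:
  assumes x: "x \<in> policies Act" and z: "\<And>s. (\<Sum>b\<in>Act i. \<bar>z s b\<bar>) \<le> 1 + \<zeta>/2"
  shows "(\<Sum>s\<in>UNIV. dvis Act P \<mu> (x(i:=z)) s * f s)
       = (\<Sum>s\<in>UNIV. \<mu> s * wcol Act P x f s)
       + (\<Sum>s\<in>UNIV. dvis Act P \<mu> (x(i:=z)) s * (\<Sum>b\<in>Act i. (z s b - x i s b) * Qc Act x i s b (\<lambda>a. \<Sum>s'\<in>UNIV. P s a s' * wcol Act P x f s')))"
proof -
  have "(\<Sum>s\<in>UNIV. dvis Act P \<mu> (x(i:=z)) s * f s)
       = (\<Sum>s\<in>UNIV. \<mu> s * wcol Act P x f s)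
       + (\<Sum>s\<in>UNIV. dvis Act P \<mu> (x(i:=z)) s * (\<Sum>s'\<in>UNIV. (Ppi Act P (x(i:=z)) s s' - Ppi Act P x s s') * wcol Act P x f s'))"
    by (rule algL[OF dvis_fix[OF Ppi_bound[OF x z] gam] wcol_bellman[OF Mx[OF x] gam]])
  then show ?thesis by (simp only: Ppi_diff)
qed

lemma Qc_add: "Qc Act x i s b (G1::_\<Rightarrow>real) + Qc Act x i s b G2 = Qc Act x i s b (\<lambda>a. G1 a + G2 a)"
  unfolding Qc_def sum.distrib[symmetric] by (rule sum.cong) (auto simp: algebra_simps)

lemma key7:
  assumes x: "x \<in> policies Act" and z: "\<And>s. (\<Sum>b\<in>Act i. \<bar>z s b\<bar>) \<le> 1 + \<zeta>/2"
  shows "Vval Act P R \<rho> (x(i:=z)) i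
       = (\<Sum>s\<in>UNIV. \<rho> s * wcol Act P x (\<lambda>s. \<Sum>a\<in>joint Act. pol x s a * R i s a) s)
       + (\<Sum>s\<in>UNIV. dvis Act P \<rho> (x(i:=z)) s * (\<Sum>b\<in>Act i. (z s b - x i s b) *
            Qc Act x i s b (\<lambda>a. R i s a + (\<Sum>s'\<in>UNIV. P s a s' * wcol Act P x (\<lambda>s. \<Sum>a\<in>joint Act. pol x s a * R i s a) s'))))"
proof -
  let ?y = "x(i:=z)"
  let ?r = "\<lambda>s. \<Sum>a\<in>joint Act. pol x s a * R i s a"
  let ?v = "wcol Act P x ?r"
  have "Vval Act P R \<rho> ?y i = (\<Sum>s\<in>UNIV. dvis Act P \<rho> ?y s * (\<Sum>a\<in>joint Act. pol ?y s a * R i s a))"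
    by (rule Vval_eq[OF Ppi_bound[OF x z] gam])
  also have "\<dots> = (\<Sum>s\<in>UNIV. dvis Act P \<rho> ?y s * ?r s)
     + (\<Sum>s\<in>UNIV. dvis Act P \<rho> ?y s * (\<Sum>b\<in>Act i. (z s b - x i s b) * Qc Act x i s b (\<lambda>a. R i s a)))"
  proof -
    have "(\<Sum>a\<in>joint Act. pol ?y s a * R i s a) = ?r s + (\<Sum>b\<in>Act i. (z s b - x i s b) * Qc Act x i s b (\<lambda>a. R i s a))" for s
      using diff_decomp[of x i z s "\<lambda>a. R i s a"]
      by (simp add: left_diff_distrib sum_subtractf)
    then show ?thesis by (simp add: distrib_left sum.distrib)
  qed
  also have "\<dots> = (\<Sum>s\<in>UNIV. \<rho> s * ?v s)
       + (\<Sum>s\<in>UNIV. dvis Act P \<rho> ?y s * (\<Sum>b\<in>Act i. (z s b - x i s b) * Qc Act x i s b (\<lambda>a. \<Sum>s'\<in>UNIV. P s a s' * ?v s')))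
     + (\<Sum>s\<in>UNIV. dvis Act P \<rho> ?y s * (\<Sum>b\<in>Act i. (z s b - x i s b) * Qc Act x i s b (\<lambda>a. R i s a)))"
    by (simp only: key6[OF x z, where \<mu>=\<rho> and f= ?r])
  finally show ?thesis
    unfolding Qc_add[symmetric] by (simp only: distrib_left sum.distrib ac_simps)
qed

lemma zt_bound:
  assumes x: "x \<in> policies Act" and t: "\<bar>t\<bar> \<le> \<zeta>/2"
  shows "(\<Sum>b\<in>Act i. \<bar>((x i)(s0 := (x i s0)(ai := x i s0 ai + t))) s b\<bar>) \<le> 1 + \<zeta>/2"
proof -
  have "(\<Sum>b\<in>Act i. \<bar>((x i)(s0 := (x i s0)(ai := x i s0 ai + t))) s b\<bar>)
      \<le> (\<Sum>b\<in>Act i. \<bar>x i s b\<bar> + \<bar>if s = s0 \<and> b = ai then t else 0\<bar>)"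
    unfolding zt_eq by (intro sum_mono abs_triangle_ineq)
  also have "\<dots> = (\<Sum>b\<in>Act i. x i s b) + (\<Sum>b\<in>Act i. \<bar>if s = s0 \<and> b = ai then t else 0\<bar>)"
    using x by (simp add: sum.distrib policies_def)
  also have "(\<Sum>b\<in>Act i. x i s b) = 1" using x by (simp add: policies_def)
  also have "(\<Sum>b\<in>Act i. \<bar>if s = s0 \<and> b = ai then t else 0\<bar>) \<le> \<bar>t\<bar>"
  proof (cases "s = s0 \<and> ai \<in> Act i")
    case True then show ?thesis using fin by (simp add: if_distrib cong: if_cong)
  next
    case False
    then have "(\<Sum>b\<in>Act i. \<bar>if s = s0 \<and> b = ai then t else 0\<bar>) = 0" by (intro sum.neutral) auto
    then show ?thesis by simp
  qed
  finally show ?thesis using t by linarith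
qed

lemma zt_sum:
  assumes "ai \<in> Act i"
  shows "(\<Sum>b\<in>Act i. (((x i)(s0 := (x i s0)(ai := x i s0 ai + (t::real)))) s b - x i s b) * Q b)
     = (if s = s0 then t * Q ai else 0)"
proof -
  have "(x i s b + (if s = s0 \<and> b = ai then t else 0) - x i s b) * Q b
      = (if b = ai then (if s = s0 then t * Q ai else 0) else 0)" for b by auto
  then show ?thesis unfolding zt_eq using assms fin by (simp add: sum.delta)
qed

lemma Fgrad_eq:
  assumes x: "x \<in> policies Act" and ai: "ai \<in> Act i"
  shows "Fgrad Act P R \<rho> x i s0 ai = - (dvis Act P \<rho> x s0 * cQ Act P R x i s0 ai)"
proof -
  define zt where "zt t = (x i)(s0 := (x i s0)(ai := x i s0 ai + t))" for t
  define c where "c = cQ Act P R x i s0 ai"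
  define D0 where "D0 = dvis Act P \<rho> x s0"
  define w where "w = wcol Act P x (dl s0)"
  define k where "k = Qc Act x i s0 ai (\<lambda>a. \<Sum>s'\<in>UNIV. P s0 a s' * w s')"
  define V0 where "V0 = (\<Sum>s\<in>UNIV. \<rho> s * wcol Act P x (\<lambda>s. \<Sum>a\<in>joint Act. pol x s a * R i s a) s)"
  have zb: "\<And>s. (\<Sum>b\<in>Act i. \<bar>zt t s b\<bar>) \<le> 1 + \<zeta>/2" if "\<bar>t\<bar> \<le> \<zeta>/2" for t
    unfolding zt_def by (rule zt_bound[OF x that])
  have V: "Vval Act P R \<rho> (x(i := zt t)) i = V0 + dvis Act P \<rho> (x(i := zt t)) s0 * (t * c)"
    if "\<bar>t\<bar> \<le> \<zeta>/2" for t
  proof -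
    have "Vval Act P R \<rho> (x(i := zt t)) i = V0 + (\<Sum>s\<in>UNIV. dvis Act P \<rho> (x(i := zt t)) s *
         (\<Sum>b\<in>Act i. (zt t s b - x i s b) * cQ Act P R x i s b))"
      unfolding V0_def cQ_def by (rule key7[OF x zb[OF that]])
    also have "\<dots> = V0 + (\<Sum>s\<in>UNIV. dvis Act P \<rho> (x(i := zt t)) s * (if s = s0 then t * c else 0))"
      unfolding zt_def c_def by (subst zt_sum[OF ai]) (intro arg_cong2[where f="(+)"] sum.cong refl, auto)
    also have "\<dots> = V0 + dvis Act P \<rho> (x(i := zt t)) s0 * (t * c)"
      by (simp add: if_distrib[where f="\<lambda>c. _ * c"] cong: if_cong)
    finally show ?thesis .
  qed
  have Dt: "dvis Act P \<rho> (x(i := zt t)) s0 = (\<Sum>s\<in>UNIV. \<rho> s * w s) + dvis Act P \<rho> (x(i := zt t)) s0 * (t * k)"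
    if "\<bar>t\<bar> \<le> \<zeta>/2" for t
  proof -
    have "(\<Sum>s\<in>UNIV. dvis Act P \<rho> (x(i := zt t)) s * dl s0 s) = (\<Sum>s\<in>UNIV. \<rho> s * w s) +
      (\<Sum>s\<in>UNIV. dvis Act P \<rho> (x(i := zt t)) s *
         (\<Sum>b\<in>Act i. (zt t s b - x i s b) * Qc Act x i s b (\<lambda>a. \<Sum>s'\<in>UNIV. P s a s' * w s')))"
      unfolding w_def by (rule key6[OF x zb[OF that]])
    also have "\<dots> = (\<Sum>s\<in>UNIV. \<rho> s * w s) + (\<Sum>s\<in>UNIV. dvis Act P \<rho> (x(i := zt t)) s * (if s = s0 then t * k else 0))"
      unfolding zt_def k_def by (subst zt_sum[OF ai]) (intro arg_cong2[where f="(+)"] sum.cong refl, auto)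
    also have "\<dots> = (\<Sum>s\<in>UNIV. \<rho> s * w s) + dvis Act P \<rho> (x(i := zt t)) s0 * (t * k)"
      by (simp add: if_distrib[where f="\<lambda>c. _ * c"] cong: if_cong)
    finally show ?thesis
      unfolding dl_def by (simp add: if_distrib[where f="\<lambda>c. _ * c"] cong: if_cong)
  qed
  have zt0: "x(i := zt 0) = x" unfolding zt_def by auto
  have D0w: "D0 = (\<Sum>s\<in>UNIV. \<rho> s * w s)"
    using Dt[of 0] zpos by (simp add: zt0 D0_def)
  define \<delta> where "\<delta> = min (\<zeta>/2) (1 / (2 * (\<bar>k\<bar> + 1)))"
  have dpos: "\<delta> > 0" unfolding \<delta>_def using zpos by (auto simp: add_pos_nonneg)
  define g where "g t = V0 + D0 / (1 - t * k) * (t * c)" for t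
  have eq: "Vval Act P R \<rho> (x(i := zt t)) i = g t" if "t \<in> ball 0 \<delta>" for t
  proof -
    have t1: "\<bar>t\<bar> \<le> \<zeta>/2" using that unfolding \<delta>_def by auto
    have t2: "\<bar>t\<bar> * (2 * (\<bar>k\<bar> + 1)) < 1" using that unfolding \<delta>_def
      by (auto simp: field_simps)
    have "\<bar>t * k\<bar> < 1"
    proof -
      have "\<bar>t * k\<bar> = \<bar>t\<bar> * \<bar>k\<bar>" by (simp add: abs_mult)
      also have "\<dots> \<le> \<bar>t\<bar> * (2 * (\<bar>k\<bar> + 1))" by (intro mult_left_mono) auto
      finally show ?thesis using t2 by linarith
    qed
    then have nz: "1 - t * k \<noteq> 0" by auto
    have "dvis Act P \<rho> (x(i := zt t)) s0 * (1 - t * k) = D0"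
      using Dt[OF t1] D0w by (simp add: algebra_simps)
    then have "dvis Act P \<rho> (x(i := zt t)) s0 = D0 / (1 - t * k)"
      using nz by (simp add: field_simps)
    then show ?thesis using V[OF t1] unfolding g_def by simp
  qed
  have "(g has_field_derivative (D0 * c)) (at 0)"
    unfolding g_def
    by (auto intro!: derivative_eq_intros simp: field_simps)
  then have "((\<lambda>t. Vval Act P R \<rho> (x(i := zt t)) i) has_field_derivative (D0 * c)) (at 0)"
    by (rule has_field_derivative_transform_within_open[OF _ open_ball[of 0 \<delta>]]) (use dpos eq in auto)
  then have "deriv (\<lambda>t. Vval Act P R \<rho> (x(i := zt t)) i) 0 = D0 * c"
    by (rule DERIV_imp_deriv)
  then show ?thesis unfolding Fgrad_def zt_def D0_def c_def by simp
qed

lemma pol_nn: "x \<in> policies Act \<Longrightarrow> pol x s a \<ge> 0"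
  unfolding pol_def policies_def by (auto intro: prod_nonneg)

lemma Ppi_nn: "x \<in> policies Act \<Longrightarrow> Ppi Act P x s s' \<ge> 0"
  unfolding Ppi_def using Pnn pol_nn by (auto intro!: sum_nonneg mult_nonneg_nonneg)

lemma sd_nn: "x \<in> policies Act \<Longrightarrow> (\<And>s. \<mu> s \<ge> 0) \<Longrightarrow> stepdist Act P \<mu> x h s \<ge> 0"
  by (induction h arbitrary: s) (auto intro!: sum_nonneg mult_nonneg_nonneg Ppi_nn)

lemma dvis_pos:
  assumes x: "x \<in> policies Act" and rho: "\<And>s. \<rho> s > 0"
  shows "dvis Act P \<rho> x s > 0"
proof -
  have nn: "dvis Act P \<rho> x s \<ge> 0" for s
    unfolding dvis_def using rho
    by (intro suminf_nonneg sd_summable[OF Mx[OF x] gam] sd_nn[OF x]) (auto intro: less_imp_le)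
  have "dvis Act P \<rho> x s = \<rho> s + (\<Sum>s'\<in>UNIV. dvis Act P \<rho> x s' * Ppi Act P x s' s)"
    by (rule dvis_fix[OF Mx[OF x] gam])
  moreover have "(\<Sum>s'\<in>UNIV. dvis Act P \<rho> x s' * Ppi Act P x s' s) \<ge> 0"
    using nn Ppi_nn[OF x] by (auto intro!: sum_nonneg)
  ultimately show ?thesis using rho[of s] by linarith
qed

lemma pol_upd_pol: "x \<in> policies Act \<Longrightarrow> xs \<in> policies Act \<Longrightarrow> x(i := xs i) \<in> policies Act"
  unfolding policies_def by auto

lemma Vval_self:
  assumes x: "x \<in> policies Act"
  shows "Vval Act P R \<rho> x (i::'p) = (\<Sum>s\<in>UNIV. \<rho> s * wcol Act P x (\<lambda>s. \<Sum>a\<in>joint Act. pol x s a * R i s a) s)"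
proof -
  have z: "(\<Sum>b\<in>Act i. \<bar>x i s b\<bar>) \<le> 1 + \<zeta>/2" for s
    using x zpos by (auto simp: policies_def)
  have e: "x(i := x i) = x" by simp
  show ?thesis using key7[where x=x and i=i and z="x i" and R=R and \<rho>=\<rho>, OF x z] unfolding e
    by (simp only: diff_self mult_zero_left sum.neutral_const mult_zero_right add_0_right)
qed

lemma per_player:
  assumes x: "x \<in> policies Act" and xs: "xs \<in> policies Act" and rho: "\<And>s. \<rho> s > 0"
  shows "(\<Sum>s\<in>UNIV. \<Sum>ai\<in>Act i.
              (x i s ai - xs i s ai) * (Fgrad Act P R \<rho> x i s ai * Lam Act P \<rho> x xs i s ai))
       = Vval Act P R \<rho> (x(i := xs i)) i - Vval Act P R \<rho> x i"
proof -
  have z: "(\<Sum>b\<in>Act i. \<bar>xs i s b\<bar>) \<le> 1 + \<zeta>/2" for s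
    using xs zpos by (auto simp: policies_def)
  have alg: "(u - v) * (- (D0 * q) * (Dy / D0)) = Dy * ((v - u) * q)" if "D0 \<noteq> 0" for u v D0 q Dy :: real
    using that by (simp add: field_simps)
  have "(\<Sum>s\<in>UNIV. \<Sum>ai\<in>Act i.
              (x i s ai - xs i s ai) * (Fgrad Act P R \<rho> x i s ai * Lam Act P \<rho> x xs i s ai))
      = (\<Sum>s\<in>UNIV. dvis Act P \<rho> (x(i := xs i)) s * (\<Sum>ai\<in>Act i. (xs i s ai - x i s ai) * cQ Act P R x i s ai))"
  proof (intro sum.cong refl)
    fix s
    have D: "dvis Act P \<rho> x s \<noteq> 0" using dvis_pos[where x=x and \<rho>=\<rho> and s=s, OF x rho] by simp
    show "(\<Sum>ai\<in>Act i. (x i s ai - xs i s ai) * (Fgrad Act P R \<rho> x i s ai * Lam Act P \<rho> x xs i s ai))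
      = dvis Act P \<rho> (x(i := xs i)) s * (\<Sum>ai\<in>Act i. (xs i s ai - x i s ai) * cQ Act P R x i s ai)"
      unfolding sum_distrib_left
    proof (intro sum.cong refl)
      fix ai assume ai: "ai \<in> Act i"
      show "(x i s ai - xs i s ai) * (Fgrad Act P R \<rho> x i s ai * Lam Act P \<rho> x xs i s ai)
        = dvis Act P \<rho> (x(i := xs i)) s * ((xs i s ai - x i s ai) * cQ Act P R x i s ai)"
        unfolding Fgrad_eq[OF x ai] Lam_def by (rule alg[OF D])
    qed
  qed
  also have "\<dots> = Vval Act P R \<rho> (x(i := xs i)) i - Vval Act P R \<rho> x i"
    using key7[where x=x and i=i and z="xs i" and R=R and \<rho>=\<rho>, OF x z] Vval_self[OF x, where i=i and R=R and \<rho>=\<rho>]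
    unfolding cQ_def by linarith
  finally show ?thesis .
qed

lemma Qc_one:
  assumes x: "x \<in> policies Act" and b: "b \<in> Act c" and G: "\<And>a. a \<in> joint Act \<Longrightarrow> a c = b \<Longrightarrow> G a = h"
  shows "Qc Act x c s b G = h"
proof -
  let ?g = "(\<lambda>j. x j s)(c := (\<lambda>_. 1))"
  have set: "{a\<in>joint Act. a c = b} = PiE UNIV (Act(c := {b}))"
  proof (intro set_eqI iffI)
    fix a assume "a \<in> {a\<in>joint Act. a c = b}"
    then show "a \<in> PiE UNIV (Act(c := {b}))" unfolding joint_def by (auto simp: PiE_iff)
  next
    fix a assume a: "a \<in> PiE UNIV (Act(c := {b}))"
    have "a j \<in> Act j" for j
    proof -
      have "a j \<in> (Act(c := {b})) j" using a by (simp add: PiE_iff del: fun_upd_apply)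
      then show ?thesis using b by (cases "j = c") auto
    qed
    moreover have "a c = b" using a by (auto simp: PiE_iff dest: spec[of _ c])
    ultimately show "a \<in> {a\<in>joint Act. a c = b}" using a unfolding joint_def by (auto simp: PiE_iff)
  qed
  have "Qc Act x c s b G = h * (\<Sum>a\<in>{a\<in>joint Act. a c = b}. \<Prod>j\<in>UNIV-{c}. x j s (a j))"
    unfolding Qc_def sum_distrib_left using G by (intro sum.cong refl) auto
  also have "(\<Sum>a\<in>{a\<in>joint Act. a c = b}. \<Prod>j\<in>UNIV-{c}. x j s (a j))
      = (\<Sum>a\<in>PiE UNIV (Act(c := {b})). \<Prod>j\<in>UNIV. ?g j (a j))"
    unfolding set by (intro sum.cong refl) (subst prod.remove[of UNIV c], auto intro!: prod.cong)
  also have "\<dots> = (\<Prod>j\<in>UNIV. \<Sum>b'\<in>(Act(c := {b})) j. ?g j b')"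
    by (rule prod_sum_PiE[symmetric]) (use fin in auto)
  also have "\<dots> = (\<Sum>b'\<in>(Act(c := {b})) c. ?g c b') * (\<Prod>j\<in>UNIV-{c}. \<Sum>b'\<in>(Act(c := {b})) j. ?g j b')"
    by (subst prod.remove[of UNIV c]) auto
  also have "(\<Prod>j\<in>UNIV-{c}. \<Sum>b'\<in>(Act(c := {b})) j. ?g j b') = 1"
    using x by (intro prod.neutral) (auto simp: policies_def)
  finally show ?thesis by simp
qed

lemma Ppi_sc:
  assumes sc: "single_controller Act P c" and x: "x \<in> policies Act"
  shows "Ppi Act P x s s' = (\<Sum>b\<in>Act c. x c s b * P s (SOME a. a \<in> joint Act \<and> a c = b) s')"
proof -
  let ?x0 = "x(c := (\<lambda>s b. 0))"
  have D1: "(\<Sum>a\<in>joint Act. (pol (?x0(c := x c)) s a - pol ?x0 s a) * P s a s')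
     = (\<Sum>b\<in>Act c. (x c s b - ?x0 c s b) * Qc Act ?x0 c s b (\<lambda>a. P s a s'))"
    by (rule diff_decomp)
  have X0: "?x0(c := x c) = x" by auto
  have pol0: "pol ?x0 s a = 0" for a by (simp add: pol_update)
  have H: "a \<in> joint Act \<Longrightarrow> a' \<in> joint Act \<Longrightarrow> a c = a' c \<Longrightarrow> P s a = P s a'" for a a'
    using sc unfolding single_controller_def by blast
  have QcE: "Qc Act ?x0 c s b (\<lambda>a. P s a s') = P s (SOME a. a \<in> joint Act \<and> a c = b) s'"
    if b: "b \<in> Act c" for b
  proof -
    have "Qc Act ?x0 c s b (\<lambda>a. P s a s') = Qc Act x c s b (\<lambda>a. P s a s')"
      unfolding Qc_def by (intro sum.cong refl arg_cong2[where f="(*)"] prod.cong) auto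
    also have "\<dots> = P s (SOME a. a \<in> joint Act \<and> a c = b) s'"
    proof (rule Qc_one[OF x b])
      fix a assume a: "a \<in> joint Act" "a c = b"
      then have "\<exists>a. a \<in> joint Act \<and> a c = b" by blast
      then have h: "(SOME a. a \<in> joint Act \<and> a c = b) \<in> joint Act \<and> (SOME a. a \<in> joint Act \<and> a c = b) c = b"
        by (rule someI_ex)
      have "P s a = P s (SOME a. a \<in> joint Act \<and> a c = b)"
        using H[of a "SOME a. a \<in> joint Act \<and> a c = b"] a h by simp
      then show "P s a s' = P s (SOME a. a \<in> joint Act \<and> a c = b) s'" by simp
    qed
    finally show ?thesis .
  qed
  have "Ppi Act P x s s' = (\<Sum>b\<in>Act c. x c s b * Qc Act ?x0 c s b (\<lambda>a. P s a s'))"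
    using D1 unfolding Ppi_def X0 pol0 by simp
  also have "\<dots> = (\<Sum>b\<in>Act c. x c s b * P s (SOME a. a \<in> joint Act \<and> a c = b) s')"
    by (rule sum.cong[OF refl]) (simp add: QcE)
  finally show ?thesis .
qed

lemma sd_cong: "Ppi Act P x = Ppi Act P y \<Longrightarrow> stepdist Act P \<mu> x h = stepdist Act P \<mu> y h"
  by (induction h) auto

lemma dvis_sc:
  assumes sc: "single_controller Act P c" and x: "x \<in> policies Act" and y: "y \<in> policies Act"
    and "x c = y c"
  shows "dvis Act P \<mu> x = dvis Act P \<mu> y"
proof -
  have "Ppi Act P x = Ppi Act P y"
    by (intro ext) (simp add: Ppi_sc[OF sc x] Ppi_sc[OF sc y] assms(4))
  then have "stepdist Act P \<mu> x h = stepdist Act P \<mu> y h" for h by (rule sd_cong)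
  then show ?thesis unfolding dvis_def[abs_def] by simp
qed

end

theorem lemma1:
  fixes Act :: "'p::finite \<Rightarrow> 'a set"
    and P :: "'s::finite \<Rightarrow> ('p \<Rightarrow> 'a) \<Rightarrow> 's \<Rightarrow> real"
    and R :: "'p \<Rightarrow> 's \<Rightarrow> ('p \<Rightarrow> 'a) \<Rightarrow> real"
    and \<rho> :: "'s \<Rightarrow> real"
    and xs :: "'p \<Rightarrow> 's \<Rightarrow> 'a \<Rightarrow> real"
  assumes game: "markov_game Act P R \<rho>"
    and xs_pol: "xs \<in> policies Act"
    and hyp: "\<forall>x\<in>policies Act.
       (\<Sum>i\<in>UNIV. Vval Act P R \<rho> (x(i := xs i)) i) - (\<Sum>i\<in>UNIV. Vval Act P R \<rho> x i) \<ge> 0"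
  shows "(\<forall>x\<in>policies Act.
           (\<Sum>i\<in>UNIV. \<Sum>s\<in>UNIV. \<Sum>ai\<in>Act i.
              (x i s ai - xs i s ai) * (Fgrad Act P R \<rho> x i s ai * Lam Act P \<rho> x xs i s ai)) \<ge> 0)
       \<and> (\<forall>c. single_controller Act P c \<longrightarrow>
           (\<forall>x\<in>policies Act.
             (\<Sum>i\<in>UNIV. \<Sum>s\<in>UNIV. \<Sum>ai\<in>Act i.
                (x i s ai - xs i s ai) *
                (Fgrad Act P R \<rho> x i s ai * Aw Act P \<rho> c x i s ai * Ww Act P \<rho> c xs i s ai)) \<ge> 0))"
proof -
  have fin: "\<forall>i. finite (Act i) \<and> Act i \<noteq> {}" and Pnn: "\<forall>s a s'. a \<in> joint Act \<longrightarrow> P s a s' \<ge> 0"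
    and rho: "\<And>s. \<rho> s > 0"
    using game unfolding markov_game_def by auto
  obtain \<zeta> where zpos: "\<zeta> > 0" and Pz: "\<forall>s a. a \<in> joint Act \<longrightarrow> 1 - (\<Sum>s'\<in>UNIV. P s a s') \<ge> \<zeta>"
    using game unfolding markov_game_def by auto
  have part1: "(\<Sum>i\<in>UNIV. \<Sum>s\<in>UNIV. \<Sum>ai\<in>Act i.
              (x i s ai - xs i s ai) * (Fgrad Act P R \<rho> x i s ai * Lam Act P \<rho> x xs i s ai)) \<ge> 0"
    if x: "x \<in> policies Act" for x
  proof -
    have "(\<Sum>i\<in>UNIV. \<Sum>s\<in>UNIV. \<Sum>ai\<in>Act i.
              (x i s ai - xs i s ai) * (Fgrad Act P R \<rho> x i s ai * Lam Act P \<rho> x xs i s ai))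
        = (\<Sum>i\<in>UNIV. Vval Act P R \<rho> (x(i := xs i)) i - Vval Act P R \<rho> x i)"
      by (intro sum.cong refl per_player[where \<rho>=\<rho>, OF fin Pnn zpos Pz x xs_pol rho])
    also have "\<dots> = (\<Sum>i\<in>UNIV. Vval Act P R \<rho> (x(i := xs i)) i) - (\<Sum>i\<in>UNIV. Vval Act P R \<rho> x i)"
      by (rule sum_subtractf)
    finally show ?thesis using hyp x by simp
  qed
  have part2: "(\<Sum>i\<in>UNIV. \<Sum>s\<in>UNIV. \<Sum>ai\<in>Act i.
                (x i s ai - xs i s ai) *
                (Fgrad Act P R \<rho> x i s ai * Aw Act P \<rho> c x i s ai * Ww Act P \<rho> c xs i s ai)) \<ge> 0"
    if sc: "single_controller Act P c" and x: "x \<in> policies Act" for c x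
  proof -
    have AW: "Aw Act P \<rho> c x i s ai * Ww Act P \<rho> c xs i s ai = Lam Act P \<rho> x xs i s ai" for i s ai
    proof (cases "i = c")
      case True
      have "dvis Act P \<rho> (x(i := xs i)) = dvis Act P \<rho> xs"
        using True by (intro dvis_sc[OF fin Pnn zpos Pz sc pol_upd_pol[OF fin Pnn zpos Pz x xs_pol] xs_pol]) simp
      then show ?thesis using True unfolding Aw_def Ww_def Lam_def by simp
    next
      case False
      have "dvis Act P \<rho> (x(i := xs i)) = dvis Act P \<rho> x"
        using False by (intro dvis_sc[OF fin Pnn zpos Pz sc pol_upd_pol[OF fin Pnn zpos Pz x xs_pol] x]) simp
      moreover have "dvis Act P \<rho> x s \<noteq> 0"
        using dvis_pos[where x=x and \<rho>=\<rho> and s=s, OF fin Pnn zpos Pz x rho] by simp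
      ultimately show ?thesis using False unfolding Aw_def Ww_def Lam_def by simp
    qed
    show ?thesis using part1[OF x] by (simp only: mult.assoc AW)
  qed
  show ?thesis using part1 part2 by blast
qed

end
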